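(* Let $X$ be a real Banach space, $f\in\Gamma_0(X)$, $S_f\ne\emptyset$, and $0<\varepsilon<|\partial f|_{\rm bd}$. Then for every $g\in\mathrm{Ptb}(f,\varepsilon)$ and every $u\in X$ with $g(u)>0$, every $x^*\in\partial g(u)$ satisfies $\|x^*\|\ge|\partial f|_{\rm bd}-\varepsilon$; consequently $\mathrm{Er}\{\mathrm{Ptb}(f,\varepsilon)\}\ge|\partial f|_{\rm bd}-\varepsilon>0$.
   Context: $\Gamma_0(X)$: proper convex lsc extended-real-valued functions on $X$. For convex $f$, $\partial f(x):=\{x^*\in X^*\mid \langle x^*,u-x\rangle\le f(u)-f(x)\ \forall u\in X\}$. $d(x,S)=\inf_{u\in S}\|u-x\|$, $d(x,\emptyset)=+\infty$, $\inf\emptyset=+\infty$. $S_f:=\{x\mid f(x)\le0\}$, $S_f^=:=\{x\mid f(x)=0\}$. $\mathrm{Er}\,g:=\inf_{g(x)>0}\frac{g(x)}{d(x,S_g)}$. $|\partial f|_{\rm bd}:=\inf_{f(x)=0} d(0,\mathrm{bd}\,\partial f(x))$. For $x\in S_f^=$, $\varepsilon,\delta\ge0$: $\tau(f,x,\varepsilon,\delta):=\inf_{u:\,f(u)\ge-\varepsilon\|u-x\|-\delta} d(0,\partial f(u))$ if $0\notin\mathrm{int}\,\partial f(x)$, and $:=d(0,\mathrm{bd}\,\partial f(x))$ if $0\in\mathrm{int}\,\partial f(x)$. $g\in\mathrm{Ptb}(f,\varepsilon)$ means: $S_g\ne\emptyset$, $g=f+p$ with $p:X\to\mathbb{R}$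 convex, and there exist $x\in S_f^=$ and $\xi\ge0$ with $\xi+|\partial f|_{\rm bd}-\tau(f,x,\xi,|p(x)|)\le\varepsilon$ and $|p(u)-p(x)|\le\xi\|u-x\|$ for all $u\in X$. $\mathrm{Er}\{\mathrm{Ptb}(f,\varepsilon)\}:=\inf_{g\in\mathrm{Ptb}(f,\varepsilon)}\mathrm{Er}\,g$. *)

theory Defs
  imports "HOL-Analysis.Analysis"
begin

text \<open>Extended-real-valued functions on a real Banach space 'a; the dual space
  X* is rendered as the space of bounded linear functionals 'a =>L real with its operator norm.\<close>

definition proper_fun :: "('a \<Rightarrow> ereal) \<Rightarrow> bool" where
  "proper_fun f \<longleftrightarrow> (\<forall>x. f x \<noteq> -\<infinity>) \<and> (\<exists>x. f x \<noteq> \<infinity>)"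

definition convex_efun :: "('a::real_vector \<Rightarrow> ereal) \<Rightarrow> bool" where
  "convex_efun f \<longleftrightarrow> convex {(x, r::real). f x \<le> ereal r}"

definition lsc_fun :: "('a::topological_space \<Rightarrow> ereal) \<Rightarrow> bool" where
  "lsc_fun f \<longleftrightarrow> (\<forall>c::real. closed {x. f x \<le> ereal c})"

definition Gamma0 :: "('a::real_normed_vector \<Rightarrow> ereal) set" where
  "Gamma0 = {f. proper_fun f \<and> convex_efun f \<and> lsc_fun f}"

definition subdiff :: "('a::real_normed_vector \<Rightarrow> ereal) \<Rightarrow> 'a \<Rightarrow> ('a \<Rightarrow>\<^sub>L real) set" where
  "subdiff f x = {x'. f x \<noteq> \<infinity> \<and> (\<forall>u. f x + ereal (blinfun_apply x' (u - x)) \<le> f u)}"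

definition dset :: "'b::metric_space \<Rightarrow> 'b set \<Rightarrow> ereal" where
  "dset x S = (if S = {} then \<infinity> else ereal (infdist x S))"

definition Sset :: "('a \<Rightarrow> ereal) \<Rightarrow> 'a set" where
  "Sset f = {x. f x \<le> 0}"

definition Seq :: "('a \<Rightarrow> ereal) \<Rightarrow> 'a set" where
  "Seq f = {x. f x = 0}"

text \<open>Error bound modulus Er g (Inf of the empty set is +infinity in ereal).\<close>
definition Er :: "('a::real_normed_vector \<Rightarrow> ereal) \<Rightarrow> ereal" where
  "Er g = Inf {g x / dset x (Sset g) | x. g x > 0}"

definition bd_modulus :: "('a::real_normed_vector \<Rightarrow> ereal) \<Rightarrow> ereal" where
  "bd_modulus f = Inf {dset 0 (frontier (subdiff f x)) | x. f x = 0}"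

definition tau :: "('a::real_normed_vector \<Rightarrow> ereal) \<Rightarrow> 'a \<Rightarrow> real \<Rightarrow> real \<Rightarrow> ereal" where
  "tau f x \<epsilon> \<delta> =
     (if 0 \<in> interior (subdiff f x) then dset 0 (frontier (subdiff f x))
      else Inf {dset 0 (subdiff f u) | u. f u \<ge> ereal (- \<epsilon> * norm (u - x) - \<delta>)})"

definition Ptb :: "('a::real_normed_vector \<Rightarrow> ereal) \<Rightarrow> real \<Rightarrow> ('a \<Rightarrow> ereal) set" where
  "Ptb f \<epsilon> = {g. Sset g \<noteq> {} \<and>
     (\<exists>p::'a \<Rightarrow> real. convex_on UNIV p \<and> g = (\<lambda>u. f u + ereal (p u)) \<and>
        (\<exists>x \<xi>. x \<in> Seq f \<and> \<xi> \<ge> 0 \<and>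
           ereal \<xi> + bd_modulus f - tau f x \<xi> \<bar>p x\<bar> \<le> ereal \<epsilon> \<and>
           (\<forall>u. \<bar>p u - p x\<bar> \<le> \<xi> * norm (u - x))))}"

definition Er_Ptb :: "('a::real_normed_vector \<Rightarrow> ereal) \<Rightarrow> real \<Rightarrow> ereal" where
  "Er_Ptb f \<epsilon> = Inf (Er ` Ptb f \<epsilon>)"

end

theory Submission
  imports Defs
begin


definition lin_graph :: "('a::real_vector \<times> real) set \<Rightarrow> bool" where
  "lin_graph G \<longleftrightarrow> (\<forall>x y x' y'. (x,y)\<in>G \<longrightarrow> (x',y')\<in>G \<longrightarrow> (x+x', y+y') \<in> G) \<and>
     (\<forall>x y c. (x,y)\<in>G \<longrightarrow> (c *\<^sub>R x, c*y) \<in> G) \<and>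
     (\<forall>x y y'. (x,y)\<in>G \<longrightarrow> (x,y')\<in>G \<longrightarrow> y = y')"

lemma HB_ext:
  fixes q :: "'a::real_vector \<Rightarrow> real" and M :: "('a \<times> real) set"
  assumes subadd: "\<And>x y. q (x+y) \<le> q x + q y"
    and hom: "\<And>t x. t > 0 \<Longrightarrow> q (t *\<^sub>R x) = t * q x"
    and lin: "lin_graph M" and dom: "\<And>x y. (x,y)\<in>M \<Longrightarrow> y \<le> q x"
    and ne: "M \<noteq> {}" and x0: "x0 \<notin> fst ` M"
  shows "\<exists>M'. lin_graph M' \<and> (\<forall>x y. (x,y)\<in>M' \<longrightarrow> y \<le> q x) \<and> M \<subseteq> M' \<and> M' \<noteq> M"
proof -
  have add: "\<And>x y x' y'. (x,y)\<in>M \<Longrightarrow> (x',y')\<in>M \<Longrightarrow> (x+x', y+y') \<in> M"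
    and sc: "\<And>x y c. (x,y)\<in>M \<Longrightarrow> (c *\<^sub>R x, c*y) \<in> M"
    and fn: "\<And>x y y'. (x,y)\<in>M \<Longrightarrow> (x,y')\<in>M \<Longrightarrow> y = y'"
    using lin unfolding lin_graph_def by blast+
  define A where "A = {y - q (d - x0) | d y. (d,y) \<in> M}"
  have AB: "a \<le> q (d + x0) - y" if "a \<in> A" "(d,y)\<in>M" for a d y
  proof -
    obtain d1 y1 where a: "a = y1 - q (d1 - x0)" "(d1,y1)\<in>M" using \<open>a\<in>A\<close> A_def by blast
    have "y1 + y \<le> q (d1 + d)" using dom add[OF a(2) that(2)] by blast
    also have "\<dots> \<le> q (d1 - x0) + q (d + x0)" using subadd[of "d1 - x0" "d + x0"] by simp
    finally show ?thesis using a by simp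
  qed
  obtain d0 y0 where d0: "(d0,y0)\<in>M" using ne by auto
  have "A \<noteq> {}" using d0 A_def by blast
  have bdd: "bdd_above A" using AB d0 by (meson bdd_above.I)
  define c where "c = Sup A"
  have c1: "a \<le> c" if "a \<in> A" for a using cSup_upper[OF that bdd] c_def by simp
  have c2: "c \<le> q (d + x0) - y" if "(d,y)\<in>M" for d y
    unfolding c_def using cSup_least[OF \<open>A\<noteq>{}\<close>] AB[OF _ that] by blast
  define M' where "M' = {(d + t *\<^sub>R x0, y + t*c) | d y t. (d,y)\<in>M}"
  have M'I: "(d + t *\<^sub>R x0, y + t*c) \<in> M'" if "(d,y)\<in>M" for d y t
    unfolding M'_def using that by blast
  have z: "(0,0) \<in> M" using sc[OF d0, of 0] by simp
  have inD: "False" if "(d,y)\<in>M" "(d',y')\<in>M" "d + t *\<^sub>R x0 = d' + t' *\<^sub>R x0" "t \<noteq> t'" for d y d' y' t t'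
  proof -
    have "x0 = (1/(t - t')) *\<^sub>R (d' - d)"
    proof -
      have "(t - t') *\<^sub>R x0 = d' - d" using that(3) by (simp add: algebra_simps)
      then have "(1/(t - t')) *\<^sub>R ((t - t') *\<^sub>R x0) = (1/(t - t')) *\<^sub>R (d' - d)" by simp
      then show ?thesis using that(4) by simp
    qed
    moreover have "(d' + (-1) *\<^sub>R d, y' + (-1)*y) \<in> M" using add[OF that(2) sc[OF that(1)]] .
    ultimately have "(x0, (1/(t - t')) * (y' - y)) \<in> M" using sc[of "d' + (-1) *\<^sub>R d" _ "1/(t-t')"] by simp
    then show False using x0 by force
  qed
  have "lin_graph M'"
    unfolding lin_graph_def
  proof (intro conjI allI impI)
    fix x y x' y' assume "(x,y)\<in>M'" "(x',y')\<in>M'"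
    then obtain d1 e1 t1 d2 e2 t2 where "x = d1 + t1 *\<^sub>R x0" "y = e1 + t1*c" "(d1,e1)\<in>M"
       "x' = d2 + t2 *\<^sub>R x0" "y' = e2 + t2*c" "(d2,e2)\<in>M" unfolding M'_def by blast
    then show "(x+x', y+y') \<in> M'"
      using M'I[OF add[of d1 e1 d2 e2], of "t1+t2"] by (simp add: algebra_simps scaleR_add_left)
  next
    fix x y c' assume "(x,y)\<in>M'"
    then obtain d1 e1 t1 where "x = d1 + t1 *\<^sub>R x0" "y = e1 + t1*c" "(d1,e1)\<in>M" unfolding M'_def by blast
    then show "(c' *\<^sub>R x, c'*y) \<in> M'"
      using M'I[OF sc[of d1 e1 c'], of "c'*t1"] by (simp add: algebra_simps scaleR_add_right)
  next
    fix x y y' assume "(x,y)\<in>M'" "(x,y')\<in>M'"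
    then obtain d1 e1 t1 d2 e2 t2 where h: "x = d1 + t1 *\<^sub>R x0" "y = e1 + t1*c" "(d1,e1)\<in>M"
       "x = d2 + t2 *\<^sub>R x0" "y' = e2 + t2*c" "(d2,e2)\<in>M" unfolding M'_def by blast
    have "t1 = t2" using inD[OF h(3) h(6)] h by metis
    then have "d1 = d2" using h by simp
    then have "e1 = e2" using fn h by blast
    then show "y = y'" using h \<open>t1 = t2\<close> by simp
  qed
  moreover have "\<forall>x y. (x,y)\<in>M' \<longrightarrow> y \<le> q x"
  proof (intro allI impI)
    fix x y assume "(x,y)\<in>M'"
    then obtain d e t where h: "x = d + t *\<^sub>R x0" "y = e + t*c" "(d,e)\<in>M" unfolding M'_def by blast
    show "y \<le> q x"
    proof (cases "t = 0")
      case True then show ?thesis using h dom by simp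
    next
      case False
      show ?thesis
      proof (cases "t > 0")
        case True
        have m: "((1/t) *\<^sub>R d, (1/t)*e) \<in> M" using sc[OF h(3)] .
        have "c \<le> q ((1/t) *\<^sub>R d + x0) - (1/t)*e" using c2[OF m] .
        then have "t*c \<le> t * q ((1/t) *\<^sub>R d + x0) - e" using True
          by (simp add: field_simps)
        also have "t * q ((1/t) *\<^sub>R d + x0) = q (t *\<^sub>R ((1/t) *\<^sub>R d + x0))" using hom[OF True] by simp
        also have "t *\<^sub>R ((1/t) *\<^sub>R d + x0) = x" using h True by (simp add: scaleR_add_right)
        finally show ?thesis using h by simp
      next
        case False
        define s where "s = - t"
        have s: "s > 0" using False \<open>t\<noteq>0\<close> s_def by simp
        have m: "((1/s) *\<^sub>R d, (1/s)*e) \<in> M" using sc[OF h(3)] .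
        have "(1/s)*e - q ((1/s) *\<^sub>R d - x0) \<in> A" unfolding A_def using m by blast
        then have "(1/s)*e - q ((1/s) *\<^sub>R d - x0) \<le> c" using c1 by blast
        then have "e - s*c \<le> s * q ((1/s) *\<^sub>R d - x0)" using s
          by (simp add: field_simps)
        also have "s * q ((1/s) *\<^sub>R d - x0) = q (s *\<^sub>R ((1/s) *\<^sub>R d - x0))" using hom[OF s] by simp
        also have "s *\<^sub>R ((1/s) *\<^sub>R d - x0) = x" using h s s_def by (simp add: scaleR_diff_right)
        finally show ?thesis using h s_def by simp
      qed
    qed
  qed
  moreover have "M \<subseteq> M'" unfolding M'_def by force
  moreover have "(x0, c) \<in> M'" using M'I[OF z, of 1] by simp
  then have "M' \<noteq> M" using x0 by force
  ultimately show ?thesis by blast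
qed

lemma HB:
  fixes q :: "'a::real_vector \<Rightarrow> real" and G0 :: "('a \<times> real) set"
  assumes subadd: "\<And>x y. q (x+y) \<le> q x + q y"
    and hom: "\<And>t x. t > 0 \<Longrightarrow> q (t *\<^sub>R x) = t * q x"
    and lin: "lin_graph G0" and dom: "\<And>x y. (x,y)\<in>G0 \<Longrightarrow> y \<le> q x"
    and ne: "G0 \<noteq> {}"
  shows "\<exists>l. linear l \<and> (\<forall>x. l x \<le> q x) \<and> (\<forall>x y. (x,y)\<in>G0 \<longrightarrow> l x = y)"
proof -
  define \<A> where "\<A> = {G. G0 \<subseteq> G \<and> lin_graph G \<and> (\<forall>x y. (x,y)\<in>G \<longrightarrow> y \<le> q x)}"
  have "\<A> \<noteq> {}" using assms unfolding \<A>_def by blast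
  moreover have "\<Union>\<C> \<in> \<A>" if Cne: "\<C> \<noteq> {}" and "subset.chain \<A> \<C>" for \<C>
  proof -
    have ch: "\<C> \<subseteq> \<A>" "\<And>X Y. X\<in>\<C> \<Longrightarrow> Y\<in>\<C> \<Longrightarrow> X \<subseteq> Y \<or> Y \<subseteq> X"
      using that(2) unfolding subset.chain_def by auto
    have lg: "lin_graph X" if "X \<in> \<C>" for X using ch(1) that unfolding \<A>_def by blast
    have addX: "(x+x', y+y') \<in> X" if "X\<in>\<C>" "(x,y)\<in>X" "(x',y')\<in>X" for X x y x' y'
      using lg[OF that(1)] that(2,3) unfolding lin_graph_def by blast
    have scX: "(c *\<^sub>R x, c*y) \<in> X" if "X\<in>\<C>" "(x,y)\<in>X" for X x y c
      using lg[OF that(1)] that(2) unfolding lin_graph_def by blast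
    have fnX: "y = y'" if "X\<in>\<C>" "(x,y)\<in>X" "(x,y')\<in>X" for X x y y'
      using lg[OF that(1)] that(2,3) unfolding lin_graph_def by blast
    have common: "\<exists>Z\<in>\<C>. X \<subseteq> Z \<and> Y \<subseteq> Z" if "X\<in>\<C>" "Y\<in>\<C>" for X Y
      using ch(2)[OF that] that by blast
    have "lin_graph (\<Union>\<C>)" unfolding lin_graph_def
    proof (intro conjI allI impI)
      fix x y x' y' assume "(x,y)\<in>\<Union>\<C>" "(x',y')\<in>\<Union>\<C>"
      then obtain X Y where XY: "X\<in>\<C>" "Y\<in>\<C>" "(x,y)\<in>X" "(x',y')\<in>Y" by blast
      obtain Z where "Z\<in>\<C>" "X \<subseteq> Z" "Y \<subseteq> Z" using common[OF XY(1,2)] by blast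
      then have "(x+x', y+y') \<in> Z" using addX XY by blast
      then show "(x+x', y+y') \<in> \<Union>\<C>" using \<open>Z\<in>\<C>\<close> by blast
    next
      fix x y c assume "(x,y)\<in>\<Union>\<C>"
      then obtain X where "X\<in>\<C>" "(x,y)\<in>X" by blast
      then show "(c *\<^sub>R x, c*y) \<in> \<Union>\<C>" using scX by blast
    next
      fix x y y' assume "(x,y)\<in>\<Union>\<C>" "(x,y')\<in>\<Union>\<C>"
      then obtain X Y where XY: "X\<in>\<C>" "Y\<in>\<C>" "(x,y)\<in>X" "(x,y')\<in>Y" by blast
      obtain Z where "Z\<in>\<C>" "X \<subseteq> Z" "Y \<subseteq> Z" using common[OF XY(1,2)] by blast
      then show "y = y'" using fnX XY by blast
    qed
    moreover have "G0 \<subseteq> \<Union>\<C>"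
    proof -
      obtain X0 where "X0 \<in> \<C>" using Cne by blast
      then show ?thesis using ch(1) unfolding \<A>_def by blast
    qed
    moreover have "\<forall>x y. (x,y)\<in>\<Union>\<C> \<longrightarrow> y \<le> q x" using ch(1) unfolding \<A>_def by blast
    ultimately show ?thesis unfolding \<A>_def by blast
  qed
  ultimately obtain M where M: "M \<in> \<A>" "\<And>X. X\<in>\<A> \<Longrightarrow> M \<subseteq> X \<Longrightarrow> X = M"
    using subset_Zorn_nonempty[of \<A>] by blast
  have Mp: "lin_graph M" "\<And>x y. (x,y)\<in>M \<Longrightarrow> y \<le> q x" "G0 \<subseteq> M" "M \<noteq> {}"
    using M(1) ne unfolding \<A>_def by auto
  have tot: "\<exists>y. (x,y)\<in>M" for x
  proof (rule ccontr)
    assume "\<nexists>y. (x,y)\<in>M"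
    then have "x \<notin> fst ` M" by force
    from HB_ext[OF subadd hom Mp(1) Mp(2) Mp(4) this] obtain M' where
      "lin_graph M'" "\<forall>x y. (x,y)\<in>M' \<longrightarrow> y \<le> q x" "M \<subseteq> M'" "M' \<noteq> M" by blast
    moreover have "M' \<in> \<A>" using calculation Mp(3) unfolding \<A>_def by blast
    ultimately show False using M(2) by blast
  qed
  have add: "\<And>x y x' y'. (x,y)\<in>M \<Longrightarrow> (x',y')\<in>M \<Longrightarrow> (x+x', y+y') \<in> M"
    and sc: "\<And>x y c. (x,y)\<in>M \<Longrightarrow> (c *\<^sub>R x, c*y) \<in> M"
    and fn: "\<And>x y y'. (x,y)\<in>M \<Longrightarrow> (x,y')\<in>M \<Longrightarrow> y = y'"
    using Mp(1) unfolding lin_graph_def by blast+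
  define l where "l x = (THE y. (x,y)\<in>M)" for x
  have lM: "(x, l x) \<in> M" for x using tot[of x] fn unfolding l_def by (metis theI)
  have lval: "l x = y" if "(x,y)\<in>M" for x y using fn[OF that lM] by simp
  have "linear l" unfolding linear_iff
    using lval[OF add[OF lM lM]] lval[OF sc[OF lM]] by auto
  moreover have "\<forall>x. l x \<le> q x" using lM Mp(2) by blast
  moreover have "\<forall>x y. (x,y)\<in>G0 \<longrightarrow> l x = y" using lval Mp(3) by blast
  ultimately show ?thesis by blast
qed



lemma norming:
  fixes h :: "'a::real_normed_vector"
  shows "\<exists>l::'a \<Rightarrow>\<^sub>L real. blinfun_apply l h = norm h \<and> norm l \<le> 1"
proof -
  define G0 where "G0 = {(t *\<^sub>R h, t * norm h) | t. True}"
  have lg: "lin_graph G0" unfolding lin_graph_def G0_def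
  proof (intro conjI allI impI)
    fix x y x' y' assume "(x, y) \<in> {(t *\<^sub>R h, t * norm h) |t. True}" "(x', y') \<in> {(t *\<^sub>R h, t * norm h) |t. True}"
    then obtain t t' where "x = t *\<^sub>R h" "y = t * norm h" "x' = t' *\<^sub>R h" "y' = t' * norm h" by blast
    then have "(x+x', y+y') = ((t+t') *\<^sub>R h, (t+t') * norm h)" by (simp add: algebra_simps scaleR_add_left)
    then show "(x+x', y+y') \<in> {(t *\<^sub>R h, t * norm h) |t. True}" by blast
  next
    fix x y c assume "(x, y) \<in> {(t *\<^sub>R h, t * norm h) |t. True}"
    then obtain t where "x = t *\<^sub>R h" "y = t * norm h" by blast
    then have "(c *\<^sub>R x, c*y) = ((c*t) *\<^sub>R h, (c*t) * norm h)" by simp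
    then show "(c *\<^sub>R x, c*y) \<in> {(t *\<^sub>R h, t * norm h) |t. True}" by blast
  next
    fix x y y' assume "(x, y) \<in> {(t *\<^sub>R h, t * norm h) |t. True}" "(x, y') \<in> {(t *\<^sub>R h, t * norm h) |t. True}"
    then obtain t t' where e: "x = t *\<^sub>R h" "y = t * norm h" "x = t' *\<^sub>R h" "y' = t' * norm h" by blast
    show "y = y'"
    proof (cases "h = 0")
      case True then show ?thesis using e by simp
    next
      case False
      have "t = t'" using e False by (metis scaleR_cancel_right)
      then show ?thesis using e by simp
    qed
  qed
  have dom: "y \<le> norm x" if "(x,y)\<in>G0" for x y
    using that unfolding G0_def by (auto intro!: mult_right_mono)
  have "G0 \<noteq> {}" unfolding G0_def by blast
  from HB[of norm, OF norm_triangle_ineq _ lg dom this] obtain l where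
    l: "linear l" "\<forall>x. l x \<le> norm x" "\<forall>x y. (x,y)\<in>G0 \<longrightarrow> l x = y" by auto
  have lh: "l h = norm h" using l(3) unfolding G0_def by (metis (mono_tags, lifting) mem_Collect_eq mult_1 scaleR_one)
  have ab: "\<bar>l x\<bar> \<le> norm x" for x
  proof -
    have "l (-x) = - l x" using l(1) by (simp add: linear_neg)
    then show ?thesis using l(2)[rule_format, of x] l(2)[rule_format, of "-x"] by simp
  qed
  have bl: "bounded_linear l"
    using l(1) ab by (intro bounded_linear_intro[where K=1]) (auto simp: linear_iff)
  show ?thesis
    apply (rule exI[of _ "Blinfun l"])
    using bl lh ab by (auto simp: bounded_linear_Blinfun_apply intro!: norm_blinfun_bound)
qed



lemma sandwich:
  fixes F :: "'a::real_normed_vector \<Rightarrow> ereal" and \<phi> :: "'a \<Rightarrow> real"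
  assumes Fconv: "\<And>a b t. F a \<noteq> \<infinity> \<Longrightarrow> F b \<noteq> \<infinity> \<Longrightarrow> 0 \<le> t \<Longrightarrow> t \<le> 1 \<Longrightarrow>
       F (t *\<^sub>R a + (1-t) *\<^sub>R b) \<le> ereal (t * real_of_ereal (F a) + (1-t) * real_of_ereal (F b))"
    and F0: "F 0 = 0" and Fge: "\<And>a. ereal (- \<phi> a) \<le> F a"
    and phic: "convex_on UNIV \<phi>" and phi0: "\<phi> 0 = 0"
    and Lip: "\<And>a b. \<bar>\<phi> a - \<phi> b\<bar> \<le> L * norm (a - b)"
  shows "\<exists>l::'a \<Rightarrow>\<^sub>L real. (\<forall>a. ereal (blinfun_apply l a) \<le> F a) \<and> (\<forall>b. - \<phi> b \<le> blinfun_apply l b)"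
proof -
  define K where "K w = {real_of_ereal (F a) + \<phi> (a - w) | a. F a \<noteq> \<infinity>}" for w
  define k where "k w = Inf (K w)" for w
  have Fr: "F a = ereal (real_of_ereal (F a))" if "F a \<noteq> \<infinity>" for a
    using that Fge[of a] by (cases "F a") auto
  have Frge: "- \<phi> a \<le> real_of_ereal (F a)" if "F a \<noteq> \<infinity>" for a
    using Fr[OF that] Fge[of a] by (metis ereal_less_eq(3))
  have Kne: "K w \<noteq> {}" for w
  proof -
    have "real_of_ereal (F 0) + \<phi> (0 - w) \<in> K w" unfolding K_def mem_Collect_eq by (intro exI[of _ 0]) (simp add: F0)
    then show ?thesis by blast
  qed
  have Klow: "- L * norm w \<le> x" if xK: "x \<in> K w" for x w
  proof -
    obtain a where a: "x = real_of_ereal (F a) + \<phi> (a - w)" "F a \<noteq> \<infinity>" using xK K_def by auto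
    have "\<bar>\<phi> a - \<phi> (a - w)\<bar> \<le> L * norm w" using Lip[of a "a - w"] by simp
    then show ?thesis using a Frge[OF a(2)] by linarith
  qed
  have Kbdd: "bdd_below (K w)" for w using Klow by (meson bdd_below.I)
  have k_le: "k w \<le> real_of_ereal (F a) + \<phi> (a - w)" if "F a \<noteq> \<infinity>" for a w
    unfolding k_def by (rule cInf_lower[OF _ Kbdd]) (use that K_def in auto)
  have k_ge: "- L * norm w \<le> k w" for w
    unfolding k_def by (rule cInf_greatest[OF Kne]) (use Klow in auto)
  have k_app: "\<exists>a. F a \<noteq> \<infinity> \<and> real_of_ereal (F a) + \<phi> (a - w) < k w + e" if "e > 0" for w e
  proof -
    have "Inf (K w) < k w + e" using that k_def by simp
    then obtain x where "x \<in> K w" "x < k w + e" using cInf_less_iff[OF Kne Kbdd] by blast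
    then show ?thesis unfolding K_def by auto
  qed
  have k_conv: "k (t *\<^sub>R w1 + (1-t) *\<^sub>R w2) \<le> t * k w1 + (1-t) * k w2"
    if t: "0 \<le> t" "t \<le> 1" for t w1 w2
  proof (rule field_le_epsilon)
    fix e :: real assume e: "0 < e"
    obtain a1 where a1: "F a1 \<noteq> \<infinity>" "real_of_ereal (F a1) + \<phi> (a1 - w1) < k w1 + e" using k_app[OF e] by blast
    obtain a2 where a2: "F a2 \<noteq> \<infinity>" "real_of_ereal (F a2) + \<phi> (a2 - w2) < k w2 + e" using k_app[OF e] by blast
    define a where "a = t *\<^sub>R a1 + (1-t) *\<^sub>R a2"
    have Fa: "F a \<le> ereal (t * real_of_ereal (F a1) + (1-t) * real_of_ereal (F a2))"
      using Fconv[OF a1(1) a2(1) t] a_def by simp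
    then have Fane: "F a \<noteq> \<infinity>" by auto
    have Far: "real_of_ereal (F a) \<le> t * real_of_ereal (F a1) + (1-t) * real_of_ereal (F a2)"
      using Fa Fr[OF Fane] by (metis ereal_less_eq(3))
    have "a - (t *\<^sub>R w1 + (1-t) *\<^sub>R w2) = t *\<^sub>R (a1 - w1) + (1-t) *\<^sub>R (a2 - w2)"
      unfolding a_def by (simp add: algebra_simps)
    then have ph: "\<phi> (a - (t *\<^sub>R w1 + (1-t) *\<^sub>R w2)) \<le> t * \<phi> (a1 - w1) + (1-t) * \<phi> (a2 - w2)"
      using convex_onD[OF phic, of "1 - t" "a1 - w1" "a2 - w2"] t by simp
    have "k (t *\<^sub>R w1 + (1-t) *\<^sub>R w2) \<le> real_of_ereal (F a) + \<phi> (a - (t *\<^sub>R w1 + (1-t) *\<^sub>R w2))"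
      using k_le[OF Fane] .
    also have "\<dots> \<le> t * (real_of_ereal (F a1) + \<phi> (a1 - w1)) + (1-t) * (real_of_ereal (F a2) + \<phi> (a2 - w2))"
      using Far ph by (simp add: algebra_simps)
    also have "\<dots> \<le> t * (k w1 + e) + (1-t) * (k w2 + e)"
    proof -
      have "t * (real_of_ereal (F a1) + \<phi> (a1 - w1)) \<le> t * (k w1 + e)"
        using a1(2) t(1) by (intro mult_left_mono) auto
      moreover have "(1-t) * (real_of_ereal (F a2) + \<phi> (a2 - w2)) \<le> (1-t) * (k w2 + e)"
        using a2(2) t(2) by (intro mult_left_mono) auto
      ultimately show ?thesis by linarith
    qed
    also have "\<dots> = t * k w1 + (1-t) * k w2 + e" by (simp add: algebra_simps)
    finally show "k (t *\<^sub>R w1 + (1-t) *\<^sub>R w2) \<le> t * k w1 + (1-t) * k w2 + e" .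
  qed
  have k_le0: "k w \<le> \<phi> (- w)" for w using k_le[of 0 w] F0 by simp
  have phi_le: "\<phi> w \<le> L * norm w" for w using Lip[of w 0] phi0 by simp
  define Q where "Q w = {k (t *\<^sub>R w) / t | t. t > 0}" for w
  define q where "q w = Inf (Q w)" for w
  have Qne: "Q w \<noteq> {}" for w unfolding Q_def by (auto intro: exI[of _ 1])
  have Qlow: "- L * norm w \<le> x" if xQ: "x \<in> Q w" for x w
  proof -
    obtain t where t: "x = k (t *\<^sub>R w) / t" "t > 0" using xQ Q_def by auto
    have "- L * norm (t *\<^sub>R w) \<le> k (t *\<^sub>R w)" by (rule k_ge)
    moreover have "t * x = k (t *\<^sub>R w)" using t by simp
    ultimately have "t * (- L * norm w) \<le> t * x" using t(2) by (simp add: algebra_simps)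
    then show ?thesis using mult_le_cancel_left_pos[OF t(2)] by blast
  qed
  have Qbdd: "bdd_below (Q w)" for w using Qlow by (meson bdd_below.I)
  have q_le: "q w \<le> k (t *\<^sub>R w) / t" if "t > 0" for t w
    unfolding q_def by (rule cInf_lower[OF _ Qbdd]) (use that Q_def in auto)
  have q_ge: "- L * norm w \<le> q w" for w
    unfolding q_def by (rule cInf_greatest[OF Qne]) (use Qlow in auto)
  have q_glb: "z \<le> q w" if "\<And>t. t > 0 \<Longrightarrow> z \<le> k (t *\<^sub>R w) / t" for z w
    unfolding q_def by (rule cInf_greatest[OF Qne]) (use that Q_def in auto)
  have q_hom: "q (s *\<^sub>R w) = s * q w" if s: "s > 0" for s w
  proof (rule antisym)
    have "q (s *\<^sub>R w) / s \<le> q w"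
    proof (rule q_glb)
      fix t :: real assume t: "t > 0"
      have tsp: "t/s > 0" using s t by simp
      have "q (s *\<^sub>R w) \<le> k ((t/s) *\<^sub>R (s *\<^sub>R w)) / (t/s)" by (rule q_le[OF tsp])
      also have "\<dots> = s * (k (t *\<^sub>R w) / t)" using s by simp
      finally show "q (s *\<^sub>R w) / s \<le> k (t *\<^sub>R w) / t" using s by (simp add: field_simps)
    qed
    then show "q (s *\<^sub>R w) \<le> s * q w" using s by (simp add: field_simps)
  next
    have "q w \<le> q (s *\<^sub>R w) / s"
    proof -
      have "s * q w \<le> q (s *\<^sub>R w)"
      proof (rule q_glb)
        fix t :: real assume t: "t > 0"
        have tsp: "0 < t * s" using s t by simp
        have "q w \<le> k ((t * s) *\<^sub>R w) / (t * s)" by (rule q_le[OF tsp])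
        then have "s * q w \<le> s * (k ((t * s) *\<^sub>R w) / (t * s))" using s by (intro mult_left_mono) auto
        also have "\<dots> = k (t *\<^sub>R (s *\<^sub>R w)) / t" using s t by (simp add: field_simps)
        finally show "s * q w \<le> k (t *\<^sub>R (s *\<^sub>R w)) / t" .
      qed
      then show ?thesis using s by (simp add: field_simps)
    qed
    then show "s * q w \<le> q (s *\<^sub>R w)" using s by (simp add: field_simps)
  qed
  have q_sub: "q (x + y) \<le> q x + q y" for x y
  proof -
    have key: "q (x + y) \<le> k (t1 *\<^sub>R x) / t1 + k (t2 *\<^sub>R y) / t2" if t1: "t1 > 0" and t2: "t2 > 0" for t1 t2
    proof -
      define t where "t = t1 * t2 / (t1 + t2)"
      define lam where "lam = t2 / (t1 + t2)"
      have tp: "t > 0" using t1 t2 t_def by simp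
      have l01: "0 \<le> lam" "lam \<le> 1" using t1 t2 lam_def by auto
      have e1: "lam * t1 = t" using t1 t2 unfolding lam_def t_def by (simp add: field_simps)
      have e2: "(1 - lam) * t2 = t" using t1 t2 unfolding lam_def t_def by (simp add: field_simps)
      have f1: "lam / t = 1 / t1" using e1 tp t1 by (simp add: field_simps)
      have f2: "(1 - lam) / t = 1 / t2" using e2 tp t2 by (simp add: field_simps)
      have "t *\<^sub>R (x + y) = lam *\<^sub>R (t1 *\<^sub>R x) + (1 - lam) *\<^sub>R (t2 *\<^sub>R y)"
      proof -
        show ?thesis by (simp add: scaleR_add_right e1 e2)
      qed
      then have "k (t *\<^sub>R (x + y)) \<le> lam * k (t1 *\<^sub>R x) + (1 - lam) * k (t2 *\<^sub>R y)"
        using k_conv[OF l01, of "t1 *\<^sub>R x" "t2 *\<^sub>R y"] by (simp only:)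
      then have "k (t *\<^sub>R (x + y)) / t \<le> (lam * k (t1 *\<^sub>R x) + (1 - lam) * k (t2 *\<^sub>R y)) / t"
        using tp by (simp add: divide_right_mono)
      also have "\<dots> = k (t1 *\<^sub>R x) / t1 + k (t2 *\<^sub>R y) / t2"
      proof -
        have g1: "lam * k (t1 *\<^sub>R x) / t = k (t1 *\<^sub>R x) / t1"
        proof -
          have "lam * k (t1 *\<^sub>R x) / t = k (t1 *\<^sub>R x) * (lam / t)" by simp
          also have "\<dots> = k (t1 *\<^sub>R x) / t1" using f1 by simp
          finally show ?thesis .
        qed
        have g2: "(1 - lam) * k (t2 *\<^sub>R y) / t = k (t2 *\<^sub>R y) / t2"
        proof -
          have "(1 - lam) * k (t2 *\<^sub>R y) / t = k (t2 *\<^sub>R y) * ((1 - lam) / t)" by simp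
          also have "\<dots> = k (t2 *\<^sub>R y) / t2" using f2 by simp
          finally show ?thesis .
        qed
        show ?thesis by (simp add: add_divide_distrib g1 g2)
      qed
      finally show ?thesis using q_le[OF tp, of "x + y"] by linarith
    qed
    have "q (x + y) - q y \<le> q x"
    proof (rule q_glb)
      fix t1 :: real assume t1: "t1 > 0"
      have "q (x + y) - k (t1 *\<^sub>R x) / t1 \<le> q y"
        by (rule q_glb) (use key[OF t1] in force)
      then show "q (x + y) - q y \<le> k (t1 *\<^sub>R x) / t1" by linarith
    qed
    then show ?thesis by linarith
  qed
  have q0: "0 \<le> q 0" using q_ge[of 0] by simp
  have "lin_graph {(0::'a, 0::real)}" unfolding lin_graph_def by auto
  from HB[of q, OF q_sub q_hom this] q0 obtain l where
    l: "linear l" "\<forall>x. l x \<le> q x" by auto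
  have lq: "l w \<le> k w" for w
  proof -
    have "q w \<le> k w" using q_le[of 1 w] by simp
    then show ?thesis using l(2) by (meson order_trans)
  qed
  have lneg: "l (- w) = - l w" for w using l(1) by (simp add: linear_neg)
  have lup: "l w \<le> L * norm w" for w
    using lq[of w] k_le0[of w] phi_le[of "-w"] by simp
  have ab: "\<bar>l x\<bar> \<le> norm x * L" for x
    using lup[of x] lup[of "-x"] lneg[of x] by (simp add: algebra_simps)
  have bl: "bounded_linear l"
    using l(1) ab by (intro bounded_linear_intro[where K=L]) (auto simp: linear_iff)
  have r1: "ereal (l a) \<le> F a" for a
  proof (cases "F a = \<infinity>")
    case False
    have "l a \<le> real_of_ereal (F a)" using lq[of a] k_le[OF False, of a] phi0 by simp
    then show ?thesis using Fr[OF False] by (metis ereal_less_eq(3))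
  qed simp
  have r2: "- \<phi> b \<le> l b" for b
    using lq[of "-b"] k_le0[of "-b"] lneg[of b] by simp
  have la: "blinfun_apply (Blinfun l) = l" using bl by (rule bounded_linear_Blinfun_apply)
  show ?thesis
    by (rule exI[of _ "Blinfun l"]) (simp only: la r1 r2 simp_thms)
qed



lemma efun_conv:
  fixes f :: "'a::real_normed_vector \<Rightarrow> ereal"
  assumes "convex_efun f" "\<And>x. f x \<noteq> -\<infinity>" "0 \<le> t" "t \<le> 1"
  shows "f (t *\<^sub>R a + (1-t) *\<^sub>R b) \<le> ereal t * f a + ereal (1-t) * f b"
proof -
  consider "t = 0" | "t = 1" | "0 < t \<and> t < 1" using assms(3,4) by linarith
  then show ?thesis
  proof cases
    case 1 then show ?thesis using assms(2)[of a] by (cases "f a") (auto simp: zero_ereal_def)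
  next
    case 2 then show ?thesis using assms(2)[of b] by (cases "f b") (auto simp: zero_ereal_def)
  next
    case 3
    show ?thesis
    proof (cases "f a = \<infinity> \<or> f b = \<infinity>")
      case True
      have "ereal t * f a + ereal (1-t) * f b = \<infinity>"
        using True 3 assms(2)[of a] assms(2)[of b]
        by (cases "f a"; cases "f b") (auto simp: ereal_mult_infty)
      then show ?thesis by (metis ereal_less_eq(1))
    next
      case False
      then obtain ra rb where r: "f a = ereal ra" "f b = ereal rb" using assms(2)[of a] assms(2)[of b]
        by (cases "f a"; cases "f b") auto
      have ina: "(a, ra) \<in> {(x, r::real). f x \<le> ereal r}" using r by simp
      have inb: "(b, rb) \<in> {(x, r::real). f x \<le> ereal r}" using r by simp
      have "t *\<^sub>R (a, ra) + (1-t) *\<^sub>R (b, rb) \<in> {(x, r::real). f x \<le> ereal r}"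
        using convexD[OF assms(1)[unfolded convex_efun_def] ina inb] 3 by simp
      then have "f (t *\<^sub>R a + (1-t) *\<^sub>R b) \<le> ereal (t * ra + (1-t) * rb)" by simp
      then show ?thesis using r by simp
    qed
  qed
qed

lemma efun_conv_r:
  fixes f :: "'a::real_normed_vector \<Rightarrow> ereal"
  assumes "convex_efun f" "f a = ereal ra" "f b = ereal rb" "0 \<le> t" "t \<le> 1"
  shows "f (t *\<^sub>R a + (1-t) *\<^sub>R b) \<le> ereal (t * ra + (1-t) * rb)"
proof -
  have ina: "(a, ra) \<in> {(x, r::real). f x \<le> ereal r}" using assms by simp
  have inb: "(b, rb) \<in> {(x, r::real). f x \<le> ereal r}" using assms by simp
  have "t *\<^sub>R (a, ra) + (1-t) *\<^sub>R (b, rb) \<in> {(x, r::real). f x \<le> ereal r}"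
    using convexD[OF assms(1)[unfolded convex_efun_def] ina inb] assms by simp
  then show ?thesis by simp
qed

lemma conv_lip:
  fixes p :: "'a::real_normed_vector \<Rightarrow> real"
  assumes pc: "convex_on UNIV p" and xi: "\<And>u. \<bar>p u - p x\<bar> \<le> \<xi> * norm (u - x)"
  shows "\<bar>p a - p b\<bar> \<le> \<xi> * norm (a - b)"
proof -
  have triv: "\<xi> \<ge> 0 \<or> (\<forall>u. u = x)"
  proof (rule ccontr)
    assume "\<not> ?thesis"
    then obtain u where u: "u \<noteq> x" "\<xi> < 0" by auto
    then have "norm (u - x) > 0" by simp
    then have "\<xi> * norm (u - x) < 0" using u(2) by (simp add: mult_neg_pos)
    then show False using xi[of u] by linarith
  qed
  have one: "p (z + h) - p z \<le> \<xi> * norm h" for z h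
  proof (cases "\<forall>u. u = x")
    case True
    then have "z + h = z" by metis
    then show ?thesis using True by simp
  next
    case False
  then have xi0: "\<xi> \<ge> 0" using triv by blast
  show ?thesis
  proof (rule ccontr)
    assume nt: "\<not> p (z + h) - p z \<le> \<xi> * norm h"
    define D where "D = p (z + h) - p z - \<xi> * norm h"
    have D: "D > 0" using nt D_def by simp
    define C where "C = p x - p z + \<xi> * norm (z - x)"
    have C: "C \<ge> 0" using xi[of z] C_def by simp
    define T where "T = C / D + 1"
    have T: "T \<ge> 1" using C D T_def by simp
    have "z + h = (1 - 1/T) *\<^sub>R z + (1/T) *\<^sub>R (z + T *\<^sub>R h)"
      using T by (simp add: algebra_simps)
    then have "p (z + h) \<le> (1 - 1/T) * p z + (1/T) * p (z + T *\<^sub>R h)"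
      using convex_onD[OF pc, of "1/T" z "z + T *\<^sub>R h"] T by simp
    then have "T * p (z + h) \<le> T * ((1 - 1/T) * p z + (1/T) * p (z + T *\<^sub>R h))"
      using T by (intro mult_left_mono) auto
    also have "\<dots> = (T - 1) * p z + p (z + T *\<^sub>R h)" using T by (simp add: field_simps)
    finally have 1: "T * (p (z + h) - p z) \<le> p (z + T *\<^sub>R h) - p z" by (simp add: algebra_simps)
    have "p (z + T *\<^sub>R h) \<le> p x + \<xi> * norm (z + T *\<^sub>R h - x)" using xi[of "z + T *\<^sub>R h"] by simp
    moreover have "norm (z + T *\<^sub>R h - x) \<le> norm (z - x) + T * norm h"
      using norm_triangle_ineq[of "z - x" "T *\<^sub>R h"] T by (simp add: algebra_simps)
    moreover note xi0
    ultimately have "p (z + T *\<^sub>R h) \<le> p x + \<xi> * norm (z - x) + \<xi> * (T * norm h)"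
      by (smt (verit, best) distrib_left mult_left_mono)
    then have "T * (p (z + h) - p z) \<le> C + T * (\<xi> * norm h)" using 1 C_def by (simp add: algebra_simps)
    then have "T * D \<le> C" unfolding D_def by (simp add: algebra_simps)
    moreover have "T * D = C + D" using D T_def by (simp add: field_simps)
    ultimately show False using D by simp
  qed
  qed
  have "p a - p b \<le> \<xi> * norm (a - b)" using one[of b "a - b"] by simp
  moreover have "p b - p a \<le> \<xi> * norm (a - b)" using one[of a "b - a"] by (simp add: norm_minus_commute)
  ultimately show ?thesis by linarith
qed

lemma lsc_plus:
  fixes f :: "'a::metric_space \<Rightarrow> ereal"
  assumes lsc: "\<And>c. closed {x. f x \<le> ereal c}" and L: "L \<ge> 0"
    and lip: "\<And>a b. \<bar>\<phi> a - \<phi> b\<bar> \<le> L * dist a b"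
  shows "closed {x. f x + ereal (\<phi> x) \<le> ereal c}"
proof -
  have "open {x. \<not> f x + ereal (\<phi> x) \<le> ereal c}"
  proof (subst open_subopen, intro ballI)
    fix x0 assume "x0 \<in> {x. \<not> f x + ereal (\<phi> x) \<le> ereal c}"
    then have "ereal c < f x0 + ereal (\<phi> x0)" by simp
    then have "ereal (c - \<phi> x0) < f x0" by (cases "f x0") auto
    then obtain r where r: "ereal (c - \<phi> x0) < ereal r" "ereal r < f x0" using ereal_dense2 by blast
    define \<eta> where "\<eta> = r - (c - \<phi> x0)"
    have eta: "\<eta> > 0" using r(1) \<eta>_def by simp
    define U where "U = {x. \<not> f x \<le> ereal r} \<inter> ball x0 (\<eta> / (L + 1))"
    have "open U" unfolding U_def using lsc[of r]
      by (intro open_Int) (auto simp: open_closed Collect_neg_eq)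
    moreover have "x0 \<in> U" unfolding U_def using r(2) eta L by auto
    moreover have "U \<subseteq> {x. \<not> f x + ereal (\<phi> x) \<le> ereal c}"
    proof
      fix y assume "y \<in> U"
      then have y: "ereal r < f y" "dist x0 y < \<eta> / (L + 1)" unfolding U_def by auto
      have "L * dist x0 y \<le> L * (\<eta> / (L+1))" using y(2) L by (intro mult_left_mono) auto
      also have "\<dots> < \<eta>" using L eta by (simp add: field_simps)
      finally have "\<phi> y > \<phi> x0 - \<eta>" using lip[of x0 y] by linarith
      then have "c < r + \<phi> y" using \<eta>_def by simp
      then show "y \<in> {x. \<not> f x + ereal (\<phi> x) \<le> ereal c}"
        using y(1) by (cases "f y") auto
    qed
    ultimately show "\<exists>T. open T \<and> x0 \<in> T \<and> T \<subseteq> {x. \<not> f x + ereal (\<phi> x) \<le> ereal c}" by blast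
  qed
  then show ?thesis by (simp add: closed_def Collect_neg_eq[symmetric] Compl_eq)
qed



lemma ekeland:
  fixes h :: "'a::{metric_space,complete_space} \<Rightarrow> ereal"
  assumes lsc: "\<And>c. closed {x. h x \<le> ereal c}" and nn: "\<And>x. 0 \<le> h x"
    and fin: "h v \<noteq> \<infinity>" and d: "\<delta> > 0"
  shows "\<exists>z. h z + ereal (\<delta> * dist z v) \<le> h v \<and> (\<forall>w. h z \<le> h w + ereal (\<delta> * dist w z))"
proof -
  define hr where "hr x = real_of_ereal (h x)" for x
  have hfin: "h x = ereal (hr x)" if "h x \<noteq> \<infinity>" for x
    using that nn[of x] unfolding hr_def by (cases "h x") auto
  have hr0: "0 \<le> hr x" for x using nn[of x] unfolding hr_def by (cases "h x") auto
  define S where "S z = {w. h w + ereal (\<delta> * dist w z) \<le> h z}" for z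
  have memS: "w \<in> S z \<longleftrightarrow> h w \<noteq> \<infinity> \<and> hr w + \<delta> * dist w z \<le> hr z" if "h z \<noteq> \<infinity>" for w z
  proof -
    have "h w + ereal (\<delta> * dist w z) \<le> ereal (hr z) \<longleftrightarrow> h w \<noteq> \<infinity> \<and> hr w + \<delta> * dist w z \<le> hr z"
      using nn[of w] unfolding hr_def by (cases "h w") auto
    then show ?thesis unfolding S_def using hfin[OF that] by simp
  qed
  have closedS: "closed (S z)" if "h z \<noteq> \<infinity>" for z
  proof -
    have "S z = {w. h w + ereal (\<delta> * dist w z) \<le> ereal (hr z)}" unfolding S_def using hfin[OF that] by simp
    moreover have "closed {w. h w + ereal (\<delta> * dist w z) \<le> ereal (hr z)}"
    proof (rule lsc_plus[OF lsc, of \<delta>])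
      show "0 \<le> \<delta>" using d by simp
      fix a b
      have "\<bar>dist a z - dist b z\<bar> \<le> dist a b"
        using dist_triangle[of a z b] dist_triangle[of b z a] by (simp add: dist_commute)
      then show "\<bar>\<delta> * dist a z - \<delta> * dist b z\<bar> \<le> \<delta> * dist a b"
        using d by (simp add: right_diff_distrib[symmetric] abs_mult)
    qed
    ultimately show ?thesis by simp
  qed
  have reflS: "z \<in> S z" if "h z \<noteq> \<infinity>" for z using memS[OF that] that by simp
  have transS: "w \<in> S z" if "w \<in> S y" "y \<in> S z" "h z \<noteq> \<infinity>" for w y z
  proof -
    have y: "h y \<noteq> \<infinity>" "hr y + \<delta> * dist y z \<le> hr z" using memS[OF that(3)] that(2) by auto
    have w: "h w \<noteq> \<infinity>" "hr w + \<delta> * dist w y \<le> hr y" using memS[OF y(1)] that(1) by auto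
    have "dist w z \<le> dist w y + dist y z" by (rule dist_triangle)
    then have "\<delta> * dist w z \<le> \<delta> * dist w y + \<delta> * dist y z" using d
      by (metis distrib_left mult_le_cancel_left_pos)
    then show ?thesis using memS[OF that(3)] w y by simp
  qed
  have Sfin: "h w \<noteq> \<infinity>" if "w \<in> S z" "h z \<noteq> \<infinity>" for w z using memS[OF that(2)] that(1) by simp
  have Sle: "hr w \<le> hr z" if "w \<in> S z" "h z \<noteq> \<infinity>" for w z
    using memS[OF that(2)] that(1) d by (smt (verit) zero_le_dist mult_nonneg_nonneg)
  define I where "I z = Inf (hr ` S z)" for z
  have Ine: "hr ` S z \<noteq> {}" if "h z \<noteq> \<infinity>" for z using reflS[OF that] by blast
  have Ibdd: "bdd_below (hr ` S z)" for z using hr0 by (intro bdd_belowI2[where m=0])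
  have Ilow: "I z \<le> hr w" if "w \<in> S z" for w z unfolding I_def using that Ibdd by (simp add: cInf_lower)
  have Iex: "\<exists>w. w \<in> S z \<and> hr w < I z + e" if "h z \<noteq> \<infinity>" "e > 0" for z e
  proof -
    have "Inf (hr ` S z) < I z + e" using that I_def by simp
    then show ?thesis using cInf_less_iff[OF Ine[OF that(1)] Ibdd] by auto
  qed
  define nxt where "nxt z n = (SOME w. w \<in> S z \<and> hr w < I z + 1 / (real n + 1))" for z n
  have nxt: "nxt z n \<in> S z \<and> hr (nxt z n) < I z + 1 / (real n + 1)" if "h z \<noteq> \<infinity>" for z n
    unfolding nxt_def by (rule someI_ex) (rule Iex[OF that], simp)
  define zs where "zs = rec_nat v (\<lambda>n z. nxt z n)"
  have zs0: "zs 0 = v" and zsS: "zs (Suc n) = nxt (zs n) n" for n unfolding zs_def by simp_all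
  have zfin: "h (zs n) \<noteq> \<infinity>" for n
  proof (induction n)
    case 0 then show ?case using zs0 fin by simp
  next
    case (Suc n) then show ?case using zsS nxt Sfin by metis
  qed
  have zstep: "zs (Suc n) \<in> S (zs n)" "hr (zs (Suc n)) < I (zs n) + 1 / (real n + 1)" for n
    using nxt[OF zfin[of n], of n] zsS by auto
  have mono: "S (zs m) \<subseteq> S (zs n)" if "n \<le> m" for m n
    using that
  proof (induction m rule: dec_induct)
    case base then show ?case by simp
  next
    case (step m)
    have "S (zs (Suc m)) \<subseteq> S (zs m)" using transS zstep(1) zfin by blast
    then show ?case using step by blast
  qed
  have key: "\<delta> * dist w (zs (Suc n)) \<le> 1 / (real n + 1)" if "w \<in> S (zs (Suc n))" for w n
  proof -
    have "w \<in> S (zs n)" using mono[of n "Suc n"] that by auto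
    then have "I (zs n) \<le> hr w" by (rule Ilow)
    moreover have "hr w + \<delta> * dist w (zs (Suc n)) \<le> hr (zs (Suc n))" using memS[OF zfin] that by blast
    ultimately show ?thesis using zstep(2)[of n] by linarith
  qed
  have dz: "dist (zs m) (zs (Suc n)) \<le> 1 / (\<delta> * (real n + 1))" if "Suc n \<le> m" for m n
  proof -
    have "zs m \<in> S (zs (Suc n))" using mono[OF that] reflS[OF zfin] by blast
    then have "\<delta> * dist (zs m) (zs (Suc n)) \<le> 1 / (real n + 1)" by (rule key)
    then have "\<delta> * dist (zs m) (zs (Suc n)) * (real n + 1) \<le> 1 / (real n + 1) * (real n + 1)"
      by (rule mult_right_mono) simp
    then have "dist (zs m) (zs (Suc n)) * (\<delta> * (real n + 1)) \<le> 1" by (simp add: algebra_simps)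
    moreover have "\<delta> * (real n + 1) > 0" using d by simp
    ultimately show ?thesis by (simp add: pos_le_divide_eq)
  qed
  have smalln: "\<exists>N. 2 / (\<delta> * (real N + 1)) < e" if "e > 0" for e
  proof -
    obtain N :: nat where "2 / (\<delta> * e) < real N" using reals_Archimedean2 by blast
    then have "2 / (\<delta> * e) < real N + 1" by linarith
    then have "2 < (real N + 1) * (\<delta> * e)" using d that by (simp add: field_simps)
    moreover have "\<delta> * (real N + 1) > 0" using d by simp
    ultimately have "2 / (\<delta> * (real N + 1)) < e" by (simp add: pos_divide_less_eq algebra_simps)
    then show ?thesis by blast
  qed
  have "Cauchy zs"
  proof (rule metric_CauchyI)
    fix e :: real assume "e > 0"
    then obtain N where N: "2 / (\<delta> * (real N + 1)) < e" using smalln by blast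
    show "\<exists>M. \<forall>m\<ge>M. \<forall>n\<ge>M. dist (zs m) (zs n) < e"
    proof (intro exI[of _ "Suc N"] allI impI)
      fix m n assume "Suc N \<le> m" "Suc N \<le> n"
      have "dist (zs m) (zs n) \<le> dist (zs m) (zs (Suc N)) + dist (zs n) (zs (Suc N))"
        by (rule dist_triangle2)
      also have "\<dots> \<le> 1 / (\<delta> * (real N + 1)) + 1 / (\<delta> * (real N + 1))"
        using dz \<open>Suc N \<le> m\<close> \<open>Suc N \<le> n\<close> by (intro add_mono) auto
      also have "\<dots> = 2 / (\<delta> * (real N + 1))" by simp
      finally show "dist (zs m) (zs n) < e" using N by linarith
    qed
  qed
  then obtain l where l: "zs \<longlonglongrightarrow> l" using Cauchy_convergent_iff convergent_def by blast
  have lS: "l \<in> S (zs n)" for n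
  proof (rule closed_sequentially[OF closedS[OF zfin]])
    show "(\<lambda>m. zs (m + n)) \<longlonglongrightarrow> l" using LIMSEQ_ignore_initial_segment[OF l] .
    fix m show "zs (m + n) \<in> S (zs n)" using mono[of n "m + n"] reflS[OF zfin] by auto
  qed
  have lfin: "h l \<noteq> \<infinity>" using Sfin[OF lS zfin] by simp
  have c1: "h l + ereal (\<delta> * dist l v) \<le> h v" using lS[of 0] zs0 S_def by simp
  have c2: "h l \<le> h w + ereal (\<delta> * dist w l)" for w
  proof (rule ccontr)
    assume nc: "\<not> h l \<le> h w + ereal (\<delta> * dist w l)"
    then have wS: "w \<in> S l" unfolding S_def by simp
    have "w \<in> S (zs n)" for n using transS[OF wS lS zfin] .
    have wl: "dist w l = 0"
    proof (rule ccontr)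
      assume "dist w l \<noteq> 0"
      then have pos: "dist w l > 0" by simp
      obtain N where N: "2 / (\<delta> * (real N + 1)) < dist w l" using smalln[OF pos] by blast
      have "w \<in> S (zs (Suc N))" using transS[OF wS lS zfin] .
      then have a: "\<delta> * dist w (zs (Suc N)) \<le> 1 / (real N + 1)" by (rule key)
      have b: "\<delta> * dist l (zs (Suc N)) \<le> 1 / (real N + 1)" using key[OF lS] .
      have "\<delta> * dist w l \<le> \<delta> * dist w (zs (Suc N)) + \<delta> * dist l (zs (Suc N))"
        using dist_triangle2[of w l "zs (Suc N)"] d by (simp add: distrib_left[symmetric])
      also have "\<dots> \<le> 2 / (real N + 1)" using a b by simp
      finally have "\<delta> * dist w l \<le> 2 / (real N + 1)" .
      then have "\<delta> * dist w l * (real N + 1) \<le> 2 / (real N + 1) * (real N + 1)"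
        by (rule mult_right_mono) simp
      moreover have "2 / (real N + 1) * (real N + 1) = 2"
      proof -
        have ne: "real N + 1 \<noteq> 0" by simp
        show ?thesis unfolding times_divide_eq_left by (rule nonzero_mult_div_cancel_right[OF ne])
      qed
      ultimately have "dist w l * (\<delta> * (real N + 1)) \<le> 2" by (simp only: mult_ac)
      moreover have "\<delta> * (real N + 1) > 0" using d by simp
      ultimately have "dist w l \<le> 2 / (\<delta> * (real N + 1))" by (simp add: pos_le_divide_eq)
      then show False using N by linarith
    qed
    then have "w = l" by simp
    then show False using nc by simp
  qed
  show ?thesis using c1 c2 by blast
qed



lemma ball_subdiff:
  fixes f :: "'a::real_normed_vector \<Rightarrow> ereal"
  assumes "0 \<in> interior (subdiff f x)" "ereal (norm z) < dset 0 (frontier (subdiff f x))"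
  shows "z \<in> subdiff f x"
proof (rule ccontr)
  assume nz: "z \<notin> subdiff f x"
  let ?S = "cball (0::'a \<Rightarrow>\<^sub>L real) (norm z)"
  have "connected ?S" by (simp add: convex_connected)
  moreover have "0 \<in> ?S \<inter> subdiff f x" using assms(1) interior_subset by auto
  moreover have "z \<in> ?S - subdiff f x" using nz by simp
  ultimately have "?S \<inter> frontier (subdiff f x) \<noteq> {}" using connected_Int_frontier by blast
  then obtain y where y: "y \<in> ?S" "y \<in> frontier (subdiff f x)" by blast
  then have "dset 0 (frontier (subdiff f x)) = ereal (infdist 0 (frontier (subdiff f x)))"
    unfolding dset_def by auto
  also have "infdist 0 (frontier (subdiff f x)) \<le> norm z"
    using infdist_le[OF y(2), of 0] y(1) by simp
  finally show False using assms(2) by simp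
qed

lemma part1:
  fixes f :: "'a::banach \<Rightarrow> ereal" and \<epsilon> :: real
  assumes f: "f \<in> Gamma0" and eps: "0 < \<epsilon>" "ereal \<epsilon> < bd_modulus f"
    and g: "g \<in> Ptb f \<epsilon>" and gu: "g u > 0" and x': "x' \<in> subdiff g u"
  shows "bd_modulus f - ereal \<epsilon> \<le> ereal (norm x')"
proof -
  obtain p x \<xi> where Sg: "Sset g \<noteq> {}" and pc: "convex_on UNIV p" and gdef: "g = (\<lambda>u. f u + ereal (p u))"
    and x: "x \<in> Seq f" and xi: "\<xi> \<ge> 0"
    and C: "ereal \<xi> + bd_modulus f - tau f x \<xi> \<bar>p x\<bar> \<le> ereal \<epsilon>"
    and lip0: "\<And>w. \<bar>p w - p x\<bar> \<le> \<xi> * norm (w - x)"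
    using g unfolding Ptb_def by blast
  have fx: "f x = 0" using x unfolding Seq_def by simp
  have fprop: "\<And>w. f w \<noteq> -\<infinity>" using f unfolding Gamma0_def proper_fun_def by auto
  have fconv: "convex_efun f" using f unfolding Gamma0_def by auto
  have plip: "\<bar>p a - p b\<bar> \<le> \<xi> * norm (a - b)" for a b using conv_lip[OF pc lip0] .
  define m where "m = bd_modulus f"
  have "m \<noteq> \<infinity>"
  proof
    assume "m = \<infinity>"
    then have "ereal \<xi> + bd_modulus f - tau f x \<xi> \<bar>p x\<bar> = \<infinity>" unfolding m_def by simp
    then show False using C by simp
  qed
  moreover have "m \<noteq> -\<infinity>" using eps(2) m_def by auto
  ultimately obtain mr where mr: "m = ereal mr" by (cases m) auto
  have mre: "\<epsilon> < mr" using eps(2) mr m_def by simp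
  have x'p: "g u \<noteq> \<infinity>" "\<And>w. g u + ereal (blinfun_apply x' (w - u)) \<le> g w"
    using x' unfolding subdiff_def by auto
  obtain fu where fu: "f u = ereal fu" using x'p(1) fprop[of u] gdef by (cases "f u") auto
  have gu': "fu + p u > 0" using gu gdef fu by simp
  show ?thesis
  proof (cases "0 \<in> interior (subdiff f x)")
    case True
    define \<tau> where "\<tau> = tau f x \<xi> \<bar>p x\<bar>"
    have tau: "\<tau> = dset 0 (frontier (subdiff f x))" using True unfolding \<tau>_def tau_def by simp
    have sharp: "ereal (s * norm (w - x)) \<le> f w" if "0 \<le> s" "ereal s < \<tau>" for s w
    proof -
      obtain N :: "'a \<Rightarrow>\<^sub>L real" where N: "blinfun_apply N (w - x) = norm (w - x)" "norm N \<le> 1"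
        using norming by blast
      have "norm (s *\<^sub>R N) \<le> s" using N(2) that(1) by (simp add: mult_left_le)
      then have "ereal (norm (s *\<^sub>R N)) < \<tau>" using that(2) by (meson ereal_less_eq(3) le_less_trans)
      then have "s *\<^sub>R N \<in> subdiff f x" using ball_subdiff[OF True] tau by simp
      then have "f x + ereal (blinfun_apply (s *\<^sub>R N) (w - x)) \<le> f w" unfolding subdiff_def by blast
      then show ?thesis using fx N(1) by (simp add: blinfun.scaleR_left)
    qed
    have tpos: "ereal \<xi> < \<tau>"
    proof (cases \<tau>)
      case (real tr)
      then have "\<xi> + mr - tr \<le> \<epsilon>" using C mr m_def \<tau>_def by simp
      then show ?thesis using real mre by simp
    next
      case PInf then show ?thesis by simp
    next
      case MInf then show ?thesis using tau unfolding dset_def by (auto split: if_splits)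
    qed
    have "u \<noteq> x"
    proof
      assume "u = x"
      then have px: "p x > 0" using gu' fu fx by simp
      obtain w where w: "g w \<le> 0" using Sg unfolding Sset_def by auto
      have "ereal (\<xi> * norm (w - x)) \<le> f w" using sharp[OF xi tpos] .
      moreover have "p w \<ge> p x - \<xi> * norm (w - x)" using lip0[of w] by linarith
      ultimately have "ereal (p x) \<le> g w" unfolding gdef using fprop[of w] by (cases "f w") auto
      then have "ereal (p x) \<le> 0" using w by (rule order_trans)
      then show False using px by simp
    qed
    have bnd: "s - \<xi> \<le> norm x'" if "0 \<le> s" "ereal s < \<tau>" for s
    proof -
      have "ereal (s * norm (u - x)) \<le> f u" using sharp[OF that] .
      then have su: "s * norm (u - x) \<le> fu" using fu by simp
      have "g u + ereal (blinfun_apply x' (x - u)) \<le> g x" using x'p(2) .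
      then have "fu + p u + blinfun_apply x' (x - u) \<le> p x" unfolding gdef using fu fx by simp
      moreover have "p u \<ge> p x - \<xi> * norm (u - x)" using lip0[of u] by linarith
      moreover have "- blinfun_apply x' (x - u) \<le> norm x' * norm (u - x)"
        using norm_blinfun[of x' "x - u"] by (simp add: norm_minus_commute)
      ultimately have "(s - \<xi>) * norm (u - x) \<le> norm x' * norm (u - x)" using su
        by (simp add: algebra_simps)
      moreover have "norm (u - x) > 0" using \<open>u \<noteq> x\<close> by simp
      ultimately show ?thesis by simp
    qed
    show ?thesis
    proof (cases \<tau>)
      case PInf
      have "norm x' + \<xi> + 1 - \<xi> \<le> norm x'" using bnd[of "norm x' + \<xi> + 1"] PInf xi by simp
      then show ?thesis by simp
    next
      case MInf then show ?thesis using tpos by simp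
    next
      case (real tr)
      have tt: "tau f x \<xi> \<bar>p x\<bar> = ereal tr" using real \<tau>_def by simp
      have C': "\<xi> + mr - tr \<le> \<epsilon>" using C mr unfolding m_def tt by simp
      have "tr \<le> norm x' + \<xi>"
      proof (rule ccontr)
        assume ntr: "\<not> tr \<le> norm x' + \<xi>"
        define s where "s = (tr + norm x' + \<xi>) / 2"
        have n0: "0 \<le> norm x'" by simp
        have trp: "0 < tr" using ntr xi n0 by linarith
        have "0 \<le> s" unfolding s_def using trp xi n0 by simp
        moreover have "ereal s < \<tau>" using ntr real s_def by simp
        ultimately have "s - \<xi> \<le> norm x'" by (rule bnd)
        then show False using ntr s_def by simp
      qed
      then show ?thesis using C' mr m_def by simp
    qed
  next
    case False
    define F where "F a = f (u + a) - ereal (fu + blinfun_apply x' a)" for a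
    define \<phi> where "\<phi> a = p (u + a) - p u" for a
    have Ffin: "F a \<noteq> \<infinity> \<longleftrightarrow> f (u + a) \<noteq> \<infinity>" for a unfolding F_def by (cases "f (u + a)") auto
    have Fr: "real_of_ereal (F a) = real_of_ereal (f (u + a)) - fu - blinfun_apply x' a" if "F a \<noteq> \<infinity>" for a
      using that fprop[of "u + a"] unfolding F_def by (cases "f (u + a)") auto
    have Fconv: "F (t *\<^sub>R a + (1-t) *\<^sub>R b) \<le> ereal (t * real_of_ereal (F a) + (1-t) * real_of_ereal (F b))"
      if Fa: "F a \<noteq> \<infinity>" and Fb: "F b \<noteq> \<infinity>" and t0: "0 \<le> t" and t1: "t \<le> 1" for a b t
    proof -
      obtain ra where ra: "f (u + a) = ereal ra" using Fa Ffin fprop[of "u + a"] by (cases "f (u + a)") auto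
      obtain rb where rb: "f (u + b) = ereal rb" using Fb Ffin fprop[of "u + b"] by (cases "f (u + b)") auto
      have e: "u + (t *\<^sub>R a + (1-t) *\<^sub>R b) = t *\<^sub>R (u + a) + (1-t) *\<^sub>R (u + b)" by (simp add: algebra_simps)
      have "f (u + (t *\<^sub>R a + (1-t) *\<^sub>R b)) \<le> ereal (t * ra + (1-t) * rb)"
        unfolding e by (rule efun_conv_r[OF fconv ra rb t0 t1])
      moreover have "blinfun_apply x' (t *\<^sub>R a + (1-t) *\<^sub>R b) = t * blinfun_apply x' a + (1-t) * blinfun_apply x' b"
        by (simp add: blinfun.add_right blinfun.scaleR_right)
      ultimately have Fle: "F (t *\<^sub>R a + (1-t) *\<^sub>R b) \<le> ereal (t * ra + (1-t) * rb - (fu + (t * blinfun_apply x' a + (1-t) * blinfun_apply x' b)))"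
        unfolding F_def by (cases "f (u + (t *\<^sub>R a + (1-t) *\<^sub>R b))") auto
      have Fra: "real_of_ereal (F a) = ra - fu - blinfun_apply x' a" using Fr[OF Fa] ra by simp
      have Frb: "real_of_ereal (F b) = rb - fu - blinfun_apply x' b" using Fr[OF Fb] rb by simp
      have "t * ra + (1-t) * rb - (fu + (t * blinfun_apply x' a + (1-t) * blinfun_apply x' b))
          = t * real_of_ereal (F a) + (1-t) * real_of_ereal (F b)"
        unfolding Fra Frb by (simp add: algebra_simps)
      then show ?thesis using Fle by simp
    qed
    have F0: "F 0 = 0" unfolding F_def using fu by simp
    have Fge: "ereal (- \<phi> a) \<le> F a" for a
    proof -
      have "g u + ereal (blinfun_apply x' a) \<le> g (u + a)" using x'p(2)[of "u + a"] by simp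
      then have "ereal (fu + p u + blinfun_apply x' a) \<le> f (u + a) + ereal (p (u + a))" unfolding gdef using fu by simp
      then show ?thesis unfolding F_def \<phi>_def using fprop[of "u + a"] by (cases "f (u + a)") auto
    qed
    have phic: "convex_on UNIV \<phi>"
    proof (rule convex_onI)
      show "convex (UNIV :: 'a set)" by simp
      fix t :: real and a b :: 'a assume t: "0 < t" "t < 1" "a \<in> UNIV" "b \<in> UNIV"
      have "\<phi> ((1 - t) *\<^sub>R a + t *\<^sub>R b) = p ((1 - t) *\<^sub>R (u + a) + t *\<^sub>R (u + b)) - p u"
        unfolding \<phi>_def by (simp add: algebra_simps)
      also have "\<dots> \<le> (1 - t) * p (u + a) + t * p (u + b) - p u"
        using convex_onD[OF pc, of t "u + a" "u + b"] t by simp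
      also have "\<dots> = (1 - t) * \<phi> a + t * \<phi> b" unfolding \<phi>_def by (simp add: algebra_simps)
      finally show "\<phi> ((1 - t) *\<^sub>R a + t *\<^sub>R b) \<le> (1 - t) * \<phi> a + t * \<phi> b" .
    qed
    have phi0: "\<phi> 0 = 0" unfolding \<phi>_def by simp
    have Lip: "\<bar>\<phi> a - \<phi> b\<bar> \<le> \<xi> * norm (a - b)" for a b
      using plip[of "u + a" "u + b"] unfolding \<phi>_def by simp
    obtain l :: "'a \<Rightarrow>\<^sub>L real" where l: "\<And>a. ereal (blinfun_apply l a) \<le> F a" "\<And>b. - \<phi> b \<le> blinfun_apply l b"
      using sandwich[of F \<phi> \<xi>, OF Fconv F0 Fge phic phi0 Lip] by blast
    have ln: "norm l \<le> \<xi>"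
    proof (rule norm_blinfun_bound[OF xi])
      fix b
      have "\<phi> b \<le> \<xi> * norm b" "\<phi> (- b) \<le> \<xi> * norm b" using Lip[of b 0] Lip[of "-b" 0] phi0 by auto
      moreover have "blinfun_apply l (- b) = - blinfun_apply l b" by (simp add: blinfun.minus_right)
      ultimately show "norm (blinfun_apply l b) \<le> \<xi> * norm b" using l(2)[of b] l(2)[of "-b"] by auto
    qed
    define y' where "y' = x' + l"
    have y': "y' \<in> subdiff f u"
      unfolding subdiff_def
    proof (intro CollectI conjI allI)
      show "f u \<noteq> \<infinity>" using fu by simp
      fix w
      have "ereal (blinfun_apply l (w - u)) \<le> F (w - u)" by (rule l(1))
      then show "f u + ereal (blinfun_apply y' (w - u)) \<le> f w"
        unfolding F_def y'_def using fu fprop[of w] by (cases "f w") (auto simp: blinfun.add_left)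
    qed
    have inset: "f u \<ge> ereal (- \<xi> * norm (u - x) - \<bar>p x\<bar>)"
      using gu' lip0[of u] fu by simp
    have "tau f x \<xi> \<bar>p x\<bar> \<le> dset 0 (subdiff f u)"
      unfolding tau_def using False inset by (auto intro!: Inf_lower)
    also have "\<dots> = ereal (infdist 0 (subdiff f u))" using y' unfolding dset_def by auto
    also have "infdist 0 (subdiff f u) \<le> norm y'" using infdist_le[OF y', of 0] by simp
    also have "norm y' \<le> norm x' + \<xi>" unfolding y'_def using norm_triangle_ineq[of x' l] ln by simp
    finally have tle: "tau f x \<xi> \<bar>p x\<bar> \<le> ereal (norm x' + \<xi>)" by simp
    show ?thesis
    proof (cases "tau f x \<xi> \<bar>p x\<bar>")
      case (real tr)
      have "\<xi> + mr - tr \<le> \<epsilon>" using C mr m_def real by simp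
      then show ?thesis using tle real mr m_def by simp
    next
      case PInf then show ?thesis using tle by simp
    next
      case MInf then show ?thesis using C mr m_def by simp
    qed
  qed
qed



lemma part2:
  fixes f :: "'a::banach \<Rightarrow> ereal" and \<epsilon> :: real
  assumes f: "f \<in> Gamma0" and eps: "0 < \<epsilon>" "ereal \<epsilon> < bd_modulus f"
    and g: "g \<in> Ptb f \<epsilon>"
  shows "bd_modulus f - ereal \<epsilon> \<le> Er g"
proof -
  obtain p x \<xi> where Sg: "Sset g \<noteq> {}" and pc: "convex_on UNIV p" and gdef: "g = (\<lambda>u. f u + ereal (p u))"
    and x: "x \<in> Seq f" and xi: "\<xi> \<ge> 0"
    and C: "ereal \<xi> + bd_modulus f - tau f x \<xi> \<bar>p x\<bar> \<le> ereal \<epsilon>"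
    and lip0: "\<And>w. \<bar>p w - p x\<bar> \<le> \<xi> * norm (w - x)"
    using g unfolding Ptb_def by blast
  have fprop: "\<And>w. f w \<noteq> -\<infinity>" using f unfolding Gamma0_def proper_fun_def by auto
  have fconv: "convex_efun f" using f unfolding Gamma0_def by auto
  have flsc: "\<And>c. closed {x. f x \<le> ereal c}" using f unfolding Gamma0_def lsc_fun_def by auto
  have plip: "\<bar>p a - p b\<bar> \<le> \<xi> * dist a b" for a b using conv_lip[OF pc lip0] by (simp add: dist_norm)
  have gprop: "g w \<noteq> -\<infinity>" for w using fprop[of w] gdef by (cases "f w") auto
  define m where "m = bd_modulus f"
  have "m \<noteq> \<infinity>"
  proof
    assume "m = \<infinity>"
    then have "ereal \<xi> + bd_modulus f - tau f x \<xi> \<bar>p x\<bar> = \<infinity>" unfolding m_def by simp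
    then show False using C by simp
  qed
  moreover have "m \<noteq> -\<infinity>" using eps(2) m_def by auto
  ultimately obtain mr where mr: "m = ereal mr" by (cases m) auto
  have mre: "\<epsilon> < mr" using eps(2) mr m_def by simp
  define c where "c = mr - \<epsilon>"
  have cpos: "c > 0" using mre c_def by simp
  have glsc: "closed {w. g w \<le> ereal c'}" for c'
    unfolding gdef using lsc_plus[OF flsc xi plip] by simp
  define S where "S = Sset g"
  have Sclosed: "closed S" unfolding S_def Sset_def using glsc[of 0] by (simp add: zero_ereal_def)
  have Sne: "S \<noteq> {}" using Sg S_def by simp
  have gconv: "g (t *\<^sub>R a + (1-t) *\<^sub>R b) \<le> ereal (t * ra + (1-t) * rb)"
    if ga: "g a = ereal ra" and gb: "g b = ereal rb" and t0: "0 \<le> t" and t1: "t \<le> 1" for a b ra rb t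
  proof -
    have fa: "f a = ereal (ra - p a)" using ga gdef fprop[of a] by (cases "f a") auto
    have fb: "f b = ereal (rb - p b)" using gb gdef fprop[of b] by (cases "f b") auto
    have "f (t *\<^sub>R a + (1-t) *\<^sub>R b) \<le> ereal (t * (ra - p a) + (1-t) * (rb - p b))"
      by (rule efun_conv_r[OF fconv fa fb t0 t1])
    moreover have "p (t *\<^sub>R a + (1-t) *\<^sub>R b) \<le> t * p a + (1-t) * p b"
      using convex_onD[OF pc, of "1 - t" a b] t0 t1 by simp
    ultimately have "f (t *\<^sub>R a + (1-t) *\<^sub>R b) + ereal (p (t *\<^sub>R a + (1-t) *\<^sub>R b))
       \<le> ereal (t * (ra - p a) + (1-t) * (rb - p b)) + ereal (t * p a + (1-t) * p b)"
      by (intro add_mono) auto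
    then show ?thesis unfolding gdef by (simp add: algebra_simps)
  qed
  show ?thesis
    unfolding Er_def
  proof (rule Inf_greatest, clarify)
    fix v assume gv0: "g v > 0"
    have vS: "v \<notin> S" using gv0 unfolding S_def Sset_def by auto
    define d where "d = infdist v S"
    have dpos: "d > 0" using vS in_closed_iff_infdist_zero[OF Sclosed Sne, of v] infdist_nonneg[of v S] d_def by simp
    have ds: "dset v (Sset g) = ereal d" using Sne unfolding dset_def d_def S_def by simp
    show "bd_modulus f - ereal \<epsilon> \<le> g v / dset v (Sset g)"
    proof (cases "g v")
      case PInf
      then have "g v / dset v (Sset g) = \<infinity>" using ds dpos by simp
      then show ?thesis by simp
    next
      case MInf then show ?thesis using gv0 by simp
    next
      case (real gv)
      have gvp: "gv > 0" using gv0 real by simp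
      have "c \<le> gv / d"
      proof (rule ccontr)
        assume "\<not> c \<le> gv / d"
        then have lt: "gv < c * d" using dpos by (simp add: field_simps)
        define lam where "lam = (gv / c + d) / 2"
        have gvc: "gv / c < d" using lt cpos by (simp add: field_simps)
        have lam1: "gv / c < lam" "lam < d" using gvc lam_def by auto
        have lampos: "lam > 0" using lam1 gvp cpos by (smt (verit) divide_pos_pos)
        define \<delta> where "\<delta> = gv / lam"
        have dp: "\<delta> > 0" using gvp lampos \<delta>_def by simp
        have dc: "\<delta> < c" using lam1(1) cpos lampos gvp unfolding \<delta>_def by (simp add: field_simps)
        define h where "h w = max (g w) 0" for w
        have hlsc: "closed {w. h w \<le> ereal c'}" for c'
        proof (cases "c' < 0")
          case True
          have "ereal c' < h w" for w
          proof -
            have "ereal c' < 0" using True by simp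
            moreover have "0 \<le> h w" unfolding h_def by simp
            ultimately show ?thesis by (rule less_le_trans)
          qed
          then have "{w. h w \<le> ereal c'} = {}" by (auto simp: not_le[symmetric])
          then show ?thesis by simp
        next
          case False
          then have "(0::ereal) \<le> ereal c'" by simp
          then have "{w. h w \<le> ereal c'} = {w. g w \<le> ereal c'}" unfolding h_def by (simp add: max.bounded_iff)
          then show ?thesis using glsc by simp
        qed
        have hnn: "0 \<le> h w" for w unfolding h_def by simp
        have hv: "h v = ereal gv" unfolding h_def using real gvp by simp
        obtain z where z1: "h z + ereal (\<delta> * dist z v) \<le> h v" and z2: "\<And>w. h z \<le> h w + ereal (\<delta> * dist w z)"
          using ekeland[OF hlsc hnn, of v \<delta>] hv dp by auto
        have dzv: "\<delta> * dist z v \<le> gv" using z1 hv hnn[of z] by (cases "h z") auto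
        have zS: "z \<notin> S"
        proof
          assume "z \<in> S"
          then have "d \<le> dist v z" using infdist_le d_def by blast
          moreover have "dist z v \<le> lam" using dzv dp unfolding \<delta>_def using lampos gvp
            by (simp add: field_simps)
          ultimately show False using lam1(2) by (simp add: dist_commute)
        qed
        then have gz0: "g z > 0" unfolding S_def Sset_def by auto
        then have hz: "h z = g z" unfolding h_def by simp
        obtain gz where gz: "g z = ereal gz" using z1 hv hz gprop[of z] hnn[of z] by (cases "g z") auto
        have gzp: "gz > 0" using gz0 gz by simp
        have glob: "g z \<le> g w + ereal (\<delta> * norm (w - z))" for w
        proof (cases "g w \<ge> 0")
          case True
          then have "h w = g w" unfolding h_def by simp
          then show ?thesis using z2[of w] hz by (simp add: dist_norm)
        next
          case False
          then obtain gw where gw: "g w = ereal gw" "gw < 0" using gprop[of w] by (cases "g w") auto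
          have "open (- S)" using Sclosed by auto
          then obtain r where r: "r > 0" "ball z r \<subseteq> - S" using zS open_contains_ball by blast
          have wz: "w \<noteq> z" using gw gz gzp by auto
          define nw where "nw = norm (w - z)"
          have nwp: "nw > 0" using wz nw_def by simp
          define t where "t = min 1 (r / (2 * nw))"
          have t: "0 < t" "t \<le> 1" "t * nw \<le> r / 2" using r nwp unfolding t_def
            by (auto simp: min_def field_simps)
          define wt where "wt = t *\<^sub>R w + (1 - t) *\<^sub>R z"
          have "wt - z = t *\<^sub>R (w - z)" unfolding wt_def by (simp add: algebra_simps)
          then have dwt: "dist wt z = t * nw" using t unfolding nw_def by (simp add: dist_norm)
          then have "wt \<in> ball z r" using t r by (simp add: dist_commute)
          then have "wt \<notin> S" using r by blast
          then have "g wt > 0" unfolding S_def Sset_def by auto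
          then have "h wt = g wt" unfolding h_def by simp
          then have A: "g z \<le> g wt + ereal (\<delta> * (t * nw))" using z2[of wt] hz dwt by simp
          have B: "g wt \<le> ereal (t * gw + (1 - t) * gz)" unfolding wt_def
            using gconv[OF gw(1) gz] t by simp
          have "g z \<le> ereal (t * gw + (1 - t) * gz) + ereal (\<delta> * (t * nw))"
            using A B by (meson add_right_mono order_trans)
          then have "gz \<le> t * gw + (1 - t) * gz + \<delta> * (t * nw)" using gz by simp
          then have "t * gz \<le> t * (gw + \<delta> * nw)" by (simp add: algebra_simps)
          then have "gz \<le> gw + \<delta> * nw" using t(1) by simp
          then show ?thesis using gz gw unfolding nw_def by simp
        qed
        define F where "F a = g (z + a) - ereal gz" for a
        define \<phi> where "\<phi> a = \<delta> * norm a" for a :: 'a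
        have Ffin: "F a \<noteq> \<infinity> \<longleftrightarrow> g (z + a) \<noteq> \<infinity>" for a unfolding F_def by (cases "g (z + a)") auto
        have Fr: "real_of_ereal (F a) = real_of_ereal (g (z + a)) - gz" if "F a \<noteq> \<infinity>" for a
          using that gprop[of "z + a"] unfolding F_def by (cases "g (z + a)") auto
        have Fconv: "F (t *\<^sub>R a + (1-t) *\<^sub>R b) \<le> ereal (t * real_of_ereal (F a) + (1-t) * real_of_ereal (F b))"
          if Fa: "F a \<noteq> \<infinity>" and Fb: "F b \<noteq> \<infinity>" and t0: "0 \<le> t" and t1: "t \<le> 1" for a b t
        proof -
          obtain ra where ra: "g (z + a) = ereal ra" using Fa Ffin gprop[of "z + a"] by (cases "g (z + a)") auto
          obtain rb where rb: "g (z + b) = ereal rb" using Fb Ffin gprop[of "z + b"] by (cases "g (z + b)") auto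
          have e: "z + (t *\<^sub>R a + (1-t) *\<^sub>R b) = t *\<^sub>R (z + a) + (1-t) *\<^sub>R (z + b)" by (simp add: algebra_simps)
          have "g (z + (t *\<^sub>R a + (1-t) *\<^sub>R b)) \<le> ereal (t * ra + (1-t) * rb)"
            unfolding e by (rule gconv[OF ra rb t0 t1])
          then have Fle: "F (t *\<^sub>R a + (1-t) *\<^sub>R b) \<le> ereal (t * ra + (1-t) * rb - gz)"
            unfolding F_def by (cases "g (z + (t *\<^sub>R a + (1-t) *\<^sub>R b))") auto
          have Fra: "real_of_ereal (F a) = ra - gz" using Fr[OF Fa] ra by simp
          have Frb: "real_of_ereal (F b) = rb - gz" using Fr[OF Fb] rb by simp
          have "t * ra + (1-t) * rb - gz = t * real_of_ereal (F a) + (1-t) * real_of_ereal (F b)"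
            unfolding Fra Frb by (simp add: algebra_simps)
          then show ?thesis using Fle by simp
        qed
        have F0: "F 0 = 0" unfolding F_def using gz by simp
        have Fge: "ereal (- \<phi> a) \<le> F a" for a
          using glob[of "z + a"] gz gprop[of "z + a"] unfolding F_def \<phi>_def by (cases "g (z + a)") auto
        have phic: "convex_on UNIV \<phi>"
        proof (rule convex_onI)
          show "convex (UNIV :: 'a set)" by simp
          fix t :: real and a b :: 'a assume t: "0 < t" "t < 1" "a \<in> UNIV" "b \<in> UNIV"
          have "norm ((1 - t) *\<^sub>R a + t *\<^sub>R b) \<le> (1 - t) * norm a + t * norm b"
            using norm_triangle_ineq[of "(1 - t) *\<^sub>R a" "t *\<^sub>R b"] t by simp
          then have "\<delta> * norm ((1 - t) *\<^sub>R a + t *\<^sub>R b) \<le> \<delta> * ((1 - t) * norm a + t * norm b)"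
            using dp by (intro mult_left_mono) auto
          then show "\<phi> ((1 - t) *\<^sub>R a + t *\<^sub>R b) \<le> (1 - t) * \<phi> a + t * \<phi> b"
            unfolding \<phi>_def by (simp add: algebra_simps)
        qed
        have phi0: "\<phi> 0 = 0" unfolding \<phi>_def by simp
        have Lip: "\<bar>\<phi> a - \<phi> b\<bar> \<le> \<delta> * norm (a - b)" for a b
          unfolding \<phi>_def using norm_triangle_ineq3[of a b] dp
          by (simp add: right_diff_distrib[symmetric] abs_mult)
        obtain l :: "'a \<Rightarrow>\<^sub>L real" where l: "\<And>a. ereal (blinfun_apply l a) \<le> F a" "\<And>b. - \<phi> b \<le> blinfun_apply l b"
          using sandwich[of F \<phi> \<delta>, OF Fconv F0 Fge phic phi0 Lip] by blast
        have ln: "norm l \<le> \<delta>"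
        proof (rule norm_blinfun_bound)
          show "0 \<le> \<delta>" using dp by simp
          fix b
          have "blinfun_apply l (- b) = - blinfun_apply l b" by (simp add: blinfun.minus_right)
          then show "norm (blinfun_apply l b) \<le> \<delta> * norm b" using l(2)[of b] l(2)[of "-b"] unfolding \<phi>_def by auto
        qed
        have lsub: "l \<in> subdiff g z"
          unfolding subdiff_def
        proof (intro CollectI conjI allI)
          show "g z \<noteq> \<infinity>" using gz by simp
          fix w
          have "ereal (blinfun_apply l (w - z)) \<le> F (w - z)" by (rule l(1))
          then show "g z + ereal (blinfun_apply l (w - z)) \<le> g w"
            unfolding F_def using gz gprop[of w] by (cases "g w") auto
        qed
        have "bd_modulus f - ereal \<epsilon> \<le> ereal (norm l)" by (rule part1[OF f eps g gz0 lsub])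
        then have "c \<le> norm l" using mr m_def c_def by simp
        then show False using ln dc by simp
      qed
      then show ?thesis using real ds dpos mr m_def c_def by simp
    qed
  qed
qed


theorem mainTheorem9:
  fixes f :: "'a::banach \<Rightarrow> ereal" and \<epsilon> :: real
  assumes "f \<in> Gamma0"
    and "Sset f \<noteq> {}"
    and "0 < \<epsilon>" and "ereal \<epsilon> < bd_modulus f"
  shows "(\<forall>g \<in> Ptb f \<epsilon>. \<forall>u. g u > 0 \<longrightarrow>
            (\<forall>x' \<in> subdiff g u. ereal (norm x') \<ge> bd_modulus f - ereal \<epsilon>))
         \<and> Er_Ptb f \<epsilon> \<ge> bd_modulus f - ereal \<epsilon>
         \<and> bd_modulus f - ereal \<epsilon> > 0"
proof (intro conjI)
  show "\<forall>g \<in> Ptb f \<epsilon>. \<forall>u. g u > 0 \<longrightarrow>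
            (\<forall>x' \<in> subdiff g u. ereal (norm x') \<ge> bd_modulus f - ereal \<epsilon>)"
    using part1[OF assms(1,3,4)] by blast
  show "Er_Ptb f \<epsilon> \<ge> bd_modulus f - ereal \<epsilon>"
    unfolding Er_Ptb_def using part2[OF assms(1,3,4)] by (blast intro: INF_greatest)
  show "bd_modulus f - ereal \<epsilon> > 0"
    using assms(4) by (cases "bd_modulus f") auto
qed

end
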